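(* Let $V$ be a Lévy measure. Set $\mathcal{A}_{sym}=\emptyset$ if $V$ is symmetric and $\mathcal{A}_{sym}=\{1\}$ otherwise. Let $0<p\le q\le2$, $\mathcal{A}=\{p,q\}\cup\mathcal{A}_{sym}$, $p_{\min}=\min\mathcal{A}$, $p_{\max}=\max\mathcal{A}$, and assume $V\in\mathscr{M}(p_{\min},p_{\max})$. Define $g(\omega)=\int_{\mathbb{R}\setminus\{0\}}\left(\mathrm{e}^{\mathrm{j}\omega a}-1-\mathrm{j}\omega a\mathbb{1}_{|a|<1}\right)V(\mathrm{d}a)$. Then there exist constants $\kappa_1,\kappa_2\ge0$ such that for all $(\omega_1,\omega_2)\in\mathbb{R}^2$, $$|g(\omega_2)-g(\omega_1)|\le\kappa_1h_{p_{\min}}(\omega_1,\omega_2)+\kappa_2h_{p_{\max}}(\omega_1,\omega_2),$$ where $h_r(x,y)=\sqrt{(|x|^r+|y|^r)|x-y|^r}$.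
   Context: A Lévy measure is a Radon measure $V$ on $\mathbb{R}\setminus\{0\}$ with $\int\min(1,a^2)V(\mathrm{d}a)<\infty$; it is symmetric if $V(B)=V(-B)$ for all Borel $B$. $\mathscr{M}(p,q)$ is the set of Radon measures $V$ on $\mathbb{R}\setminus\{0\}$ with $\int_{0<|a|<1}|a|^qV(\mathrm{d}a)<\infty$ and $\int_{|a|\ge1}|a|^pV(\mathrm{d}a)<\infty$. $\mathrm{j}=\sqrt{-1}$. *)

theory Defs
  imports "HOL-Analysis.Analysis"
begin

text \<open>Measures on \<real>\<setminus>{0} are modelled as Borel measures on \<real> giving no mass to {0}.
  Radon = finite on compact subsets of \<real>\<setminus>{0}.\<close>

definition radon_on_punctured :: "real measure \<Rightarrow> bool" where
  "radon_on_punctured V \<longleftrightarrow> sets V = sets borel \<and> emeasure V {0} = 0 \<and>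
     (\<forall>K. compact K \<and> K \<subseteq> - {0} \<longrightarrow> emeasure V K < \<infinity>)"

definition levy_measure :: "real measure \<Rightarrow> bool" where
  "levy_measure V \<longleftrightarrow> radon_on_punctured V \<and>
     (\<integral>\<^sup>+ a. ennreal (min 1 (a\<^sup>2)) \<partial>V) < \<infinity>"

definition symmetric_measure :: "real measure \<Rightarrow> bool" where
  "symmetric_measure V \<longleftrightarrow> (\<forall>B \<in> sets borel. emeasure V B = emeasure V (uminus ` B))"

definition script_M :: "real \<Rightarrow> real \<Rightarrow> real measure set" where
  "script_M p q = {V. radon_on_punctured V \<and>
     (\<integral>\<^sup>+ a. ennreal (indicator {a. 0 < \<bar>a\<bar> \<and> \<bar>a\<bar> < 1} a * \<bar>a\<bar> powr q) \<partial>V) < \<infinity> \<and>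
     (\<integral>\<^sup>+ a. ennreal (indicator {a. 1 \<le> \<bar>a\<bar>} a * \<bar>a\<bar> powr p) \<partial>V) < \<infinity>}"

definition levy_exponent :: "real measure \<Rightarrow> real \<Rightarrow> complex" where
  "levy_exponent V \<omega> = (\<integral> a. (exp (\<i> * of_real (\<omega> * a)) - 1
       - \<i> * of_real (\<omega> * a) * of_real (indicator {a. \<bar>a\<bar> < 1} a)) \<partial>V)"

definition h_fun :: "real \<Rightarrow> real \<Rightarrow> real \<Rightarrow> real" where
  "h_fun r x y = sqrt ((\<bar>x\<bar> powr r + \<bar>y\<bar> powr r) * \<bar>x - y\<bar> powr r)"

definition A_sym :: "real measure \<Rightarrow> real set" where
  "A_sym V = (if symmetric_measure V then {} else {1})"

end

theory Submission
  imports Defs "HOL-Probability.Characteristic_Functions"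
begin


lemma iexp_taylor2: "cmod (iexp x - 1 - \<i> * complex_of_real x) \<le> x\<^sup>2 / 2"
  using iexp_approx1[of x 1] by (simp add: power2_eq_square algebra_simps numeral_2_eq_2)

lemma iexp_taylor1: "cmod (iexp x - 1) \<le> \<bar>x\<bar>"
  using iexp_approx1[of x 0] by simp

lemma iexp_norm: "cmod (iexp x) = 1"
  by (simp add: norm_exp_i_times)

lemma iexp_diff_le: "cmod (iexp x - iexp y) \<le> min 2 \<bar>x - y\<bar>"
proof -
  have eq: "iexp x - iexp y = iexp y * (iexp (x - y) - 1)"
    by (simp add: algebra_simps exp_add[symmetric])
  have "cmod (iexp (x - y) - 1) \<le> min 2 \<bar>x - y\<bar>"
  proof -
    have "cmod (iexp (x - y) - 1) \<le> cmod (iexp (x-y)) + cmod 1" by (rule norm_triangle_ineq4)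
    then have "cmod (iexp (x - y) - 1) \<le> 2" by (simp add: iexp_norm)
    then show ?thesis using iexp_taylor1[of "x-y"] by simp
  qed
  then show ?thesis unfolding eq norm_mult iexp_norm by simp
qed

lemma min_le_powr: fixes t s :: real assumes "0 \<le> t" "0 < s" "s \<le> 1" shows "min 1 t \<le> t powr s"
proof (cases "t \<le> 1")
  case True
  then show ?thesis using assms
    using powr_mono'[of s 1 t] by (simp add: powr_one)
next
  case False
  then show ?thesis using assms by (simp add: ge_one_powr_ge_zero)
qed

lemma h_ge: fixes r x y :: real assumes "0 < r"
  shows "(max \<bar>x\<bar> \<bar>y\<bar> * \<bar>x - y\<bar>) powr (r/2) \<le> h_fun r x y"
proof -
  define M where "M = max \<bar>x\<bar> \<bar>y\<bar>"
  define D where "D = \<bar>x - y\<bar>"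
  have M0: "0 \<le> M" "0 \<le> D" by (auto simp: M_def D_def)
  have "M powr r \<le> \<bar>x\<bar> powr r + \<bar>y\<bar> powr r"
    by (cases "\<bar>x\<bar> \<le> \<bar>y\<bar>") (auto simp: M_def max_def)
  then have le: "(M*D) powr r \<le> (\<bar>x\<bar> powr r + \<bar>y\<bar> powr r) * D powr r"
    using M0 by (simp add: powr_mult mult_right_mono)
  have "(M*D) powr (r/2) = sqrt ((M*D) powr r)"
    using M0 by (simp add: powr_half_sqrt[symmetric] powr_powr)
  also have "\<dots> \<le> h_fun r x y" unfolding h_fun_def D_def[symmetric]
    using le by (rule real_sqrt_le_mono)
  finally show ?thesis by (simp add: M_def D_def)
qed

lemma mult_min_powr_near:
  fixes D M s :: real
  assumes "0 \<le> D" "D \<le> 2 * M" "1/2 \<le> s" "s \<le> 1"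
  shows "D * min 1 M \<le> 2 * (M * D) powr s"
proof (cases "D = 0")
  case True then show ?thesis by simp
next
  case False
  then have D: "0 < D" using assms by simp
  then have M: "0 < M" using assms by simp
  have "D = D powr s * D powr (1 - s)" using D by (simp add: powr_add[symmetric])
  also have "D powr (1 - s) \<le> (2*M) powr (1 - s)"
    using assms D by (intro powr_mono2) auto
  also have "(2*M) powr (1 - s) = 2 powr (1 - s) * M powr (1 - s)" using M by (simp add: powr_mult)
  also have "2 powr (1 - s) \<le> (2::real)" using assms
    using powr_mono[of "1 - s" 1 "2::real"] by simp
  finally have 1: "D \<le> D powr s * (2 * M powr (1 - s))"
    using D M by (simp add: mult_left_mono mult_right_mono)
  have 2: "M powr (1 - s) * min 1 M \<le> M powr s"
  proof (cases "M \<le> 1")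
    case True
    have e: "M powr (2 - s) = M powr (1 - s + 1)" by simp
    have "M powr (1 - s) * M = M powr (2 - s)" unfolding e powr_add using M by simp
    also have "\<dots> \<le> M powr s" using True M assms by (intro powr_mono') auto
    finally show ?thesis using True by simp
  next
    case False
    then show ?thesis using assms by (simp add: powr_mono)
  qed
  have "D * min 1 M \<le> D powr s * (2 * M powr (1 - s)) * min 1 M"
    using 1 M by (intro mult_right_mono) auto
  also have "\<dots> = 2 * D powr s * (M powr (1 - s) * min 1 M)" by simp
  also have "\<dots> \<le> 2 * D powr s * M powr s" using 2 by (simp add: mult_left_mono)
  also have "\<dots> = 2 * (M * D) powr s" using M D by (simp add: powr_mult)
  finally show ?thesis .
qed

lemma near_bound:
  fixes x y r :: real
  assumes "1 \<le> r" "r \<le> 2"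
  shows "cmod (iexp x - iexp y - \<i> * complex_of_real (x - y))
          \<le> 8 * (max \<bar>x\<bar> \<bar>y\<bar> * \<bar>x - y\<bar>) powr (r/2)"
proof -
  define d where "d = x - y"
  define D where "D = \<bar>x - y\<bar>"
  define M where "M = max \<bar>x\<bar> \<bar>y\<bar>"
  have DM: "D \<le> 2 * M" "0 \<le> D" "\<bar>y\<bar> \<le> M" "\<bar>d\<bar> = D" by (auto simp: D_def M_def d_def)
  have DM0: "0 \<le> D * M" using DM by simp
  have eq: "iexp x - iexp y - \<i> * complex_of_real (x - y)
      = iexp y * (iexp d - 1 - \<i> * complex_of_real d) + (\<i> * complex_of_real d) * (iexp y - 1)"
    by (simp add: d_def algebra_simps exp_add[symmetric])
  have "cmod (iexp x - iexp y - \<i> * complex_of_real (x - y))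
      \<le> cmod (iexp d - 1 - \<i> * complex_of_real d) + D * cmod (iexp y - 1)"
    unfolding eq using norm_triangle_ineq[of "iexp y * (iexp d - 1 - \<i> * complex_of_real d)" "(\<i> * complex_of_real d) * (iexp y - 1)"]
    by (simp add: norm_mult iexp_norm DM)
  also have "cmod (iexp d - 1 - \<i> * complex_of_real d) \<le> 2 * D * min 1 M"
  proof -
    have a: "cmod (iexp d - 1 - \<i> * complex_of_real d) \<le> d\<^sup>2/2" by (rule iexp_taylor2)
    have "cmod (iexp d - 1 - \<i> * complex_of_real d) \<le> cmod (iexp d - 1) + cmod (\<i> * complex_of_real d)"
      by (rule norm_triangle_ineq4)
    then have b: "cmod (iexp d - 1 - \<i> * complex_of_real d) \<le> 2 * D"
      using iexp_taylor1[of d] DM by (simp add: norm_mult)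
    have "d\<^sup>2 = D * D" unfolding DM(4)[symmetric] by (simp add: power2_eq_square)
    then have "d\<^sup>2/2 = D * D / 2" by simp
    also have "\<dots> \<le> D * (2 * M) / 2" using DM by (intro divide_right_mono mult_left_mono) auto
    also have "\<dots> = D * M" by simp
    finally have c: "d\<^sup>2/2 \<le> D * M" .
    show ?thesis
    proof (cases "M \<le> 1")
      case True
      have m: "min 1 M = M" using True by simp
      have "cmod (iexp d - 1 - \<i> * complex_of_real d) \<le> D * M" using a c by linarith
      then show ?thesis unfolding m using DM0 by linarith
    next
      case False then show ?thesis using b by simp
    qed
  qed
  also have "D * cmod (iexp y - 1) \<le> D * (2 * min 1 M)"
  proof -
    have "cmod (iexp y - 1) \<le> min 2 \<bar>y\<bar>" using iexp_diff_le[of y 0] by simp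
    also have "\<dots> \<le> 2 * min 1 M" using DM by auto
    finally show ?thesis using DM by (simp add: mult_left_mono)
  qed
  finally have 1: "cmod (iexp x - iexp y - \<i> * complex_of_real (x - y)) \<le> 4 * (D * min 1 M)" by simp
  have "D * min 1 M \<le> 2 * (M * D) powr (r/2)"
    using assms DM by (intro mult_min_powr_near) auto
  with 1 show ?thesis by (simp add: M_def D_def)
qed

lemma far_bound:
  fixes x y r :: real
  assumes "0 < r" "r \<le> 1"
  shows "cmod (iexp x - iexp y) \<le> 4 * (max \<bar>x\<bar> \<bar>y\<bar> * \<bar>x - y\<bar>) powr (r/2)"
proof -
  define D where "D = \<bar>x - y\<bar>"
  define M where "M = max \<bar>x\<bar> \<bar>y\<bar>"
  have DM: "D \<le> 2 * M" "0 \<le> D" "0 \<le> M" by (auto simp: D_def M_def)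
  have "cmod (iexp x - iexp y) \<le> min 2 D" using iexp_diff_le[of x y] by (simp add: D_def)
  also have "\<dots> \<le> 2 * min 1 D" using DM by (auto simp: min_def)
  also have "min 1 D \<le> D powr r" using assms DM by (intro min_le_powr) auto
  finally have c1: "cmod (iexp x - iexp y) \<le> 2 * D powr r" by simp
  have c2: "D powr r = D powr (r/2) * D powr (r/2)" by (simp add: powr_add[symmetric])
  have "D powr (r/2) \<le> (2*M) powr (r/2)" using DM assms by (intro powr_mono2) auto
  also have "(2*M) powr (r/2) = 2 powr (r/2) * M powr (r/2)" using DM by (simp add: powr_mult)
  also have "\<dots> \<le> 2 * M powr (r/2)" using powr_mono[of "r/2" 1 "2::real"] assms
    by (intro mult_right_mono) auto
  finally have c3: "D powr (r/2) \<le> 2 * M powr (r/2)" .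
  have "D powr (r/2) * D powr (r/2) \<le> D powr (r/2) * (2 * M powr (r/2))"
    using c3 by (intro mult_left_mono) auto
  with c1 c2 have "cmod (iexp x - iexp y) \<le> 2 * (D powr (r/2) * (2 * M powr (r/2)))" by linarith
  also have "\<dots> = 4 * (M powr (r/2) * D powr (r/2))" by simp
  also have "\<dots> = 4 * (M * D) powr (r/2)" using DM by (simp add: powr_mult)
  finally show ?thesis by (simp add: M_def D_def)
qed

lemma sym_bound:
  fixes x y r :: real
  assumes "0 < r" "r \<le> 2"
  shows "\<bar>cos x - cos y\<bar> \<le> 2 * (max \<bar>x\<bar> \<bar>y\<bar> * \<bar>x - y\<bar>) powr (r/2)"
proof -
  define D where "D = \<bar>x - y\<bar>"
  define M where "M = max \<bar>x\<bar> \<bar>y\<bar>"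
  have DM: "0 \<le> D" "0 \<le> M" by (auto simp: D_def M_def)
  have s1: "\<bar>sin ((x + y)/2)\<bar> \<le> min 1 M"
  proof -
    have "\<bar>sin ((x + y)/2)\<bar> \<le> \<bar>(x + y)/2\<bar>" by (rule abs_sin_x_le_abs_x)
    also have "\<dots> \<le> M" by (auto simp: M_def)
    finally show ?thesis using abs_sin_le_one by simp
  qed
  have s2: "\<bar>sin ((y - x)/2)\<bar> \<le> min 1 D"
  proof -
    have "\<bar>sin ((y - x)/2)\<bar> \<le> \<bar>(y - x)/2\<bar>" by (rule abs_sin_x_le_abs_x)
    also have "\<dots> \<le> D" by (auto simp: D_def abs_minus_commute)
    finally show ?thesis using abs_sin_le_one by simp
  qed
  have "\<bar>cos x - cos y\<bar> = 2 * (\<bar>sin ((x + y)/2)\<bar> * \<bar>sin ((y - x)/2)\<bar>)"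
    by (simp add: cos_diff_cos abs_mult)
  also have "\<dots> \<le> 2 * (min 1 M * min 1 D)"
    using s1 s2 by (intro mult_left_mono mult_mono) auto
  also have "\<dots> \<le> 2 * (M powr (r/2) * D powr (r/2))"
  proof -
    have "min 1 M \<le> M powr (r/2)" using assms DM by (intro min_le_powr) auto
    moreover have "min 1 D \<le> D powr (r/2)" using assms DM by (intro min_le_powr) auto
    ultimately show ?thesis using DM by (intro mult_left_mono mult_mono) auto
  qed
  also have "M powr (r/2) * D powr (r/2) = (M * D) powr (r/2)" using DM by (simp add: powr_mult)
  finally show ?thesis by (simp add: M_def D_def)
qed



definition Fl :: "real \<Rightarrow> real \<Rightarrow> complex" where
  "Fl \<omega> a = exp (\<i> * of_real (\<omega> * a)) - 1
       - \<i> * of_real (\<omega> * a) * of_real (indicator {a. \<bar>a\<bar> < 1} a)"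

definition Bnd :: "real \<Rightarrow> real \<Rightarrow> real \<Rightarrow> real \<Rightarrow> real \<Rightarrow> real" where
  "Bnd s t \<omega>1 \<omega>2 a = h_fun s \<omega>1 \<omega>2 * (indicator {a. \<bar>a\<bar> < 1} a * \<bar>a\<bar> powr s)
     + h_fun t \<omega>1 \<omega>2 * (indicator {a. 1 \<le> \<bar>a\<bar>} a * \<bar>a\<bar> powr t)"

lemma h_fun_nonneg: "0 \<le> h_fun r x y"
  unfolding h_fun_def by simp

lemma scale_P:
  fixes a w1 w2 r :: real
  shows "(max \<bar>w2*a\<bar> \<bar>w1*a\<bar> * \<bar>w2*a - w1*a\<bar>) powr (r/2)
     = \<bar>a\<bar> powr r * (max \<bar>w1\<bar> \<bar>w2\<bar> * \<bar>w1 - w2\<bar>) powr (r/2)"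
proof -
  have "max \<bar>w2*a\<bar> \<bar>w1*a\<bar> * \<bar>w2*a - w1*a\<bar> = (\<bar>a\<bar> * \<bar>a\<bar>) * (max \<bar>w1\<bar> \<bar>w2\<bar> * \<bar>w1 - w2\<bar>)"
  proof -
    have 1: "max \<bar>w2*a\<bar> \<bar>w1*a\<bar> = \<bar>a\<bar> * max \<bar>w1\<bar> \<bar>w2\<bar>"
      by (simp add: abs_mult max_mult_distrib_left max.commute mult.commute)
    have 2: "\<bar>w2*a - w1*a\<bar> = \<bar>a\<bar> * \<bar>w1 - w2\<bar>"
      by (metis abs_minus_commute abs_mult left_diff_distrib mult.commute)
    show ?thesis unfolding 1 2 by (simp add: mult_ac)
  qed
  moreover have e3: "(\<bar>a\<bar>*\<bar>a\<bar>) powr (r/2) = \<bar>a\<bar> powr r"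
    by (simp only: powr_mult powr_add[symmetric]) simp
  moreover have "0 \<le> max \<bar>w1\<bar> \<bar>w2\<bar> * \<bar>w1 - w2\<bar>" by simp
  ultimately show ?thesis
    using powr_mult[of "\<bar>a\<bar>*\<bar>a\<bar>" "max \<bar>w1\<bar> \<bar>w2\<bar> * \<bar>w1 - w2\<bar>" "r/2"]
    by (simp only:)
qed

lemma P_le_h:
  fixes a w1 w2 r :: real assumes "0 < r"
  shows "(max \<bar>w2*a\<bar> \<bar>w1*a\<bar> * \<bar>w2*a - w1*a\<bar>) powr (r/2) \<le> \<bar>a\<bar> powr r * h_fun r w1 w2"
  unfolding scale_P by (rule mult_left_mono[OF h_ge[OF assms]]) simp

lemma nonsym_pointwise:
  assumes "1 \<le> s" "s \<le> 2" "0 < t" "t \<le> 1"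
  shows "cmod (Fl w2 a - Fl w1 a) \<le> 8 * Bnd s t w1 w2 a"
proof (cases "\<bar>a\<bar> < 1")
  case True
  have "Fl w2 a - Fl w1 a = iexp (w2*a) - iexp (w1*a) - \<i> * complex_of_real (w2*a - w1*a)"
    using True by (simp add: Fl_def algebra_simps)
  also have "cmod \<dots> \<le> 8 * (max \<bar>w2*a\<bar> \<bar>w1*a\<bar> * \<bar>w2*a - w1*a\<bar>) powr (s/2)"
    using assms by (intro near_bound) auto
  also have "\<dots> \<le> 8 * (\<bar>a\<bar> powr s * h_fun s w1 w2)"
    using P_le_h[of s w2 a w1] assms by simp
  finally show ?thesis using True by (simp add: Bnd_def mult_ac)
next
  case False
  have "Fl w2 a - Fl w1 a = iexp (w2*a) - iexp (w1*a)"
    using False by (simp add: Fl_def algebra_simps)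
  also have "cmod \<dots> \<le> 4 * (max \<bar>w2*a\<bar> \<bar>w1*a\<bar> * \<bar>w2*a - w1*a\<bar>) powr (t/2)"
    using assms by (intro far_bound) auto
  also have "\<dots> \<le> 4 * (\<bar>a\<bar> powr t * h_fun t w1 w2)"
    using P_le_h[of t w2 a w1] assms by simp
  also have "\<dots> \<le> 8 * (\<bar>a\<bar> powr t * h_fun t w1 w2)"
    using h_fun_nonneg[of t w1 w2] by simp
  finally show ?thesis using False by (simp add: Bnd_def mult_ac)
qed

lemma sym_pointwise:
  assumes "0 < s" "s \<le> 2" "0 < t" "t \<le> 2"
  shows "cmod (complex_of_real (cos (w2*a) - 1) - complex_of_real (cos (w1*a) - 1)) \<le> 8 * Bnd s t w1 w2 a"
proof -
  have e: "cmod (complex_of_real (cos (w2*a) - 1) - complex_of_real (cos (w1*a) - 1)) = \<bar>cos (w2*a) - cos (w1*a)\<bar>"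
    by (simp flip: of_real_diff)
  show ?thesis
  proof (cases "\<bar>a\<bar> < 1")
    case True
    have "\<bar>cos (w2*a) - cos (w1*a)\<bar> \<le> 2 * (max \<bar>w2*a\<bar> \<bar>w1*a\<bar> * \<bar>w2*a - w1*a\<bar>) powr (s/2)"
      using assms by (intro sym_bound) auto
    also have "\<dots> \<le> 2 * (\<bar>a\<bar> powr s * h_fun s w1 w2)"
      using P_le_h[of s w2 a w1] assms by simp
    also have "\<dots> \<le> 8 * (\<bar>a\<bar> powr s * h_fun s w1 w2)"
      using h_fun_nonneg[of s w1 w2] by simp
    finally show ?thesis using True e by (simp add: Bnd_def mult_ac)
  next
    case False
    have "\<bar>cos (w2*a) - cos (w1*a)\<bar> \<le> 2 * (max \<bar>w2*a\<bar> \<bar>w1*a\<bar> * \<bar>w2*a - w1*a\<bar>) powr (t/2)"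
      using assms by (intro sym_bound) auto
    also have "\<dots> \<le> 2 * (\<bar>a\<bar> powr t * h_fun t w1 w2)"
      using P_le_h[of t w2 a w1] assms by simp
    also have "\<dots> \<le> 8 * (\<bar>a\<bar> powr t * h_fun t w1 w2)"
      using h_fun_nonneg[of t w1 w2] by simp
    finally show ?thesis using False e by (simp add: Bnd_def mult_ac)
  qed
qed



lemma meas_Fl: "Fl w \<in> borel_measurable borel"
  unfolding Fl_def by measurable

lemma meas_f1: "(\<lambda>a::real. indicator {a. \<bar>a\<bar> < 1} a * \<bar>a\<bar> powr s) \<in> borel_measurable borel"
  by measurable

lemma meas_f2: "(\<lambda>a::real. indicator {a. 1 \<le> \<bar>a\<bar>} a * \<bar>a\<bar> powr s) \<in> borel_measurable borel"
  by measurable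

lemma Fl_le: "cmod (Fl w a) \<le> (w\<^sup>2/2 + 2) * min 1 (a\<^sup>2)"
proof (cases "\<bar>a\<bar> < 1")
  case True
  then have "Fl w a = iexp (w*a) - 1 - \<i> * complex_of_real (w*a)" by (simp add: Fl_def)
  also have "cmod \<dots> \<le> (w*a)\<^sup>2/2" by (rule iexp_taylor2)
  also have "\<dots> \<le> (w\<^sup>2/2 + 2) * a\<^sup>2" by (simp add: power_mult_distrib algebra_simps)
  finally have 1: "cmod (Fl w a) \<le> (w\<^sup>2/2 + 2) * a\<^sup>2" .
  have "a\<^sup>2 \<le> 1" using True by (simp add: abs_square_le_1 less_imp_le)
  then have "min 1 (a\<^sup>2) = a\<^sup>2" by simp
  with 1 show ?thesis by simp
next
  case False
  then have "Fl w a = iexp (w*a) - iexp 0" by (simp add: Fl_def)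
  also have "cmod \<dots> \<le> 2" using iexp_diff_le[of "w*a" 0] by simp
  also have "2 \<le> (w\<^sup>2/2 + 2) * min 1 (a\<^sup>2)"
  proof -
    have "1 \<le> a\<^sup>2" using False abs_square_less_1[of a] by simp
    then show ?thesis by simp
  qed
  finally show ?thesis .
qed

lemma meas_V: "sets V = sets borel \<Longrightarrow> f \<in> borel_measurable borel \<Longrightarrow> f \<in> borel_measurable V"
  using measurable_cong_sets[of V borel borel borel] by simp

lemma integrable_Fl:
  assumes "levy_measure V"
  shows "integrable V (Fl w)"
proof -
  have sV: "sets V = sets borel" using assms by (simp add: levy_measure_def radon_on_punctured_def)
  have m: "(\<lambda>a::real. min 1 (a\<^sup>2)) \<in> borel_measurable V" by (intro meas_V[OF sV]) measurable
  have "integrable V (\<lambda>a::real. min 1 (a\<^sup>2))"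
    using assms m by (intro integrableI_bounded) (auto simp: levy_measure_def)
  then have "integrable V (\<lambda>a. (w\<^sup>2/2 + 2) * min 1 (a\<^sup>2))" by simp
  then show ?thesis
  proof (rule Bochner_Integration.integrable_bound)
    show "Fl w \<in> borel_measurable V" by (rule meas_V[OF sV meas_Fl])
    show "AE x in V. norm (Fl w x) \<le> norm ((w\<^sup>2/2 + 2) * min 1 (x\<^sup>2))"
      by (intro AE_I2 order.trans[OF Fl_le]) simp
  qed
qed

lemma integrable_f1:
  assumes sV: "sets V = sets borel" and "0 < s"
    and fin: "(\<integral>\<^sup>+ a. ennreal (indicator {a. 0 < \<bar>a\<bar> \<and> \<bar>a\<bar> < 1} a * \<bar>a\<bar> powr s) \<partial>V) < \<infinity>"
  shows "integrable V (\<lambda>a. indicator {a. \<bar>a\<bar> < 1} a * \<bar>a\<bar> powr s)"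
proof (rule integrableI_bounded)
  show "(\<lambda>a. indicator {a. \<bar>a\<bar> < 1} a * \<bar>a\<bar> powr s) \<in> borel_measurable V"
    by (rule meas_V[OF sV meas_f1])
  have "(\<lambda>a. ennreal (norm (indicator {a. \<bar>a\<bar> < 1} a * \<bar>a\<bar> powr s)))
      = (\<lambda>a. ennreal (indicator {a. 0 < \<bar>a\<bar> \<and> \<bar>a\<bar> < 1} a * \<bar>a\<bar> powr s))"
    by (auto simp: indicator_def fun_eq_iff)
  then show "(\<integral>\<^sup>+ a. ennreal (norm (indicator {a. \<bar>a\<bar> < 1} a * \<bar>a\<bar> powr s)) \<partial>V) < \<infinity>"
    using fin by simp
qed

lemma integrable_f2:
  assumes sV: "sets V = sets borel"
    and fin: "(\<integral>\<^sup>+ a. ennreal (indicator {a. 1 \<le> \<bar>a\<bar>} a * \<bar>a\<bar> powr s) \<partial>V) < \<infinity>"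
  shows "integrable V (\<lambda>a. indicator {a. 1 \<le> \<bar>a\<bar>} a * \<bar>a\<bar> powr s)"
proof (rule integrableI_bounded)
  show "(\<lambda>a. indicator {a. 1 \<le> \<bar>a\<bar>} a * \<bar>a\<bar> powr s) \<in> borel_measurable V"
    by (rule meas_V[OF sV meas_f2])
  have "(\<lambda>a. ennreal (norm (indicator {a. 1 \<le> \<bar>a\<bar>} a * \<bar>a\<bar> powr s)))
      = (\<lambda>a. ennreal (indicator {a. 1 \<le> \<bar>a\<bar>} a * \<bar>a\<bar> powr s))"
    by (auto simp: indicator_def fun_eq_iff)
  then show "(\<integral>\<^sup>+ a. ennreal (norm (indicator {a. 1 \<le> \<bar>a\<bar>} a * \<bar>a\<bar> powr s)) \<partial>V) < \<infinity>"
    using fin by simp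
qed

lemma final:
  fixes V :: "real measure" and G :: "real \<Rightarrow> real \<Rightarrow> complex"
  assumes intG: "\<And>w. integrable V (G w)"
    and eqG: "\<And>w. levy_exponent V w = integral\<^sup>L V (G w)"
    and bnd: "\<And>w1 w2 a. cmod (G w2 a - G w1 a) \<le> C * Bnd s t w1 w2 a"
    and C: "0 \<le> C"
    and i1: "integrable V (\<lambda>a. indicator {a. \<bar>a\<bar> < 1} a * \<bar>a\<bar> powr s)"
    and i2: "integrable V (\<lambda>a. indicator {a. 1 \<le> \<bar>a\<bar>} a * \<bar>a\<bar> powr t)"
  shows "\<exists>\<kappa>1 \<kappa>2. \<kappa>1 \<ge> 0 \<and> \<kappa>2 \<ge> 0 \<and> (\<forall>\<omega>1 \<omega>2.
     cmod (levy_exponent V \<omega>2 - levy_exponent V \<omega>1)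
       \<le> \<kappa>1 * h_fun t \<omega>1 \<omega>2 + \<kappa>2 * h_fun s \<omega>1 \<omega>2)"
proof -
  define I1 where "I1 = integral\<^sup>L V (\<lambda>a. indicator {a. \<bar>a\<bar> < 1} a * \<bar>a\<bar> powr s)"
  define I2 where "I2 = integral\<^sup>L V (\<lambda>a. indicator {a. 1 \<le> \<bar>a\<bar>} a * \<bar>a\<bar> powr t)"
  have I1: "0 \<le> I1" unfolding I1_def by (intro integral_nonneg_AE) (auto simp: indicator_def)
  have I2: "0 \<le> I2" unfolding I2_def by (intro integral_nonneg_AE) (auto simp: indicator_def)
  show ?thesis
  proof (intro exI conjI allI)
    show "0 \<le> C * I2" "0 \<le> C * I1" using C I1 I2 by auto
    fix w1 w2
    have ib: "integrable V (\<lambda>a. C * Bnd s t w1 w2 a)"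
      unfolding Bnd_def using i1 i2 by (intro integrable_mult_right integrable_add) auto
    have "levy_exponent V w2 - levy_exponent V w1 = integral\<^sup>L V (\<lambda>a. G w2 a - G w1 a)"
      using intG by (simp add: eqG)
    also have "cmod \<dots> \<le> integral\<^sup>L V (\<lambda>a. C * Bnd s t w1 w2 a)"
      by (rule Bochner_Integration.integral_norm_bound_integral[OF Bochner_Integration.integrable_diff[OF intG intG] ib bnd])
    also have "\<dots> = C * I2 * h_fun t w1 w2 + C * I1 * h_fun s w1 w2"
      unfolding Bnd_def I1_def I2_def using i1 i2 by (simp add: algebra_simps)
    finally show "cmod (levy_exponent V w2 - levy_exponent V w1) \<le> C * I2 * h_fun t w1 w2 + C * I1 * h_fun s w1 w2" .
  qed
qed



lemma distr_sym:
  assumes sV: "sets V = sets borel" and sym: "symmetric_measure V"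
  shows "distr V borel uminus = (V :: real measure)"
proof (rule measure_eqI)
  show "sets (distr V borel uminus) = sets V" using sV by simp
  fix A assume "A \<in> sets (distr V borel uminus)"
  then have A: "A \<in> sets borel" by simp
  have sp: "space V = UNIV" using sets_eq_imp_space_eq[OF sV] by simp
  have m: "(uminus :: real \<Rightarrow> real) \<in> measurable V borel" by (intro meas_V[OF sV]) measurable
  have "emeasure (distr V borel uminus) A = emeasure V (uminus -` A \<inter> space V)"
    using m A by (rule emeasure_distr)
  also have "uminus -` A \<inter> space V = uminus ` A" unfolding sp by force
  also have "emeasure V (uminus ` A) = emeasure V A"
    using sym A unfolding symmetric_measure_def by simp
  finally show "emeasure (distr V borel uminus) A = emeasure V A" .
qed

lemma Fl_neg: "Fl w (-a) = cnj (Fl w a)"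
  unfolding Fl_def by (simp add: exp_cnj indicator_def)

lemma Re_Fl: "Re (Fl w a) = cos (w*a) - 1"
  unfolding Fl_def by (simp add: Re_exp indicator_def)

lemma sym_eq:
  assumes L: "levy_measure V" and sym: "symmetric_measure V"
  shows "levy_exponent V w = integral\<^sup>L V (\<lambda>a. complex_of_real (cos (w*a) - 1))"
    and "integrable V (\<lambda>a. complex_of_real (cos (w*a) - 1))"
proof -
  have sV: "sets V = sets borel" using L by (simp add: levy_measure_def radon_on_punctured_def)
  have i: "integrable V (Fl w)" by (rule integrable_Fl[OF L])
  have m: "(uminus :: real \<Rightarrow> real) \<in> measurable V borel" by (intro meas_V[OF sV]) measurable
  have "integral\<^sup>L V (Fl w) = integral\<^sup>L (distr V borel uminus) (Fl w)" using distr_sym[OF sV sym] by simp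
  also have "\<dots> = integral\<^sup>L V (\<lambda>a. Fl w (- a))" by (rule integral_distr[OF m meas_Fl])
  also have "\<dots> = cnj (integral\<^sup>L V (Fl w))" by (simp add: Fl_neg)
  finally have c: "integral\<^sup>L V (Fl w) = cnj (integral\<^sup>L V (Fl w))" .
  then have "integral\<^sup>L V (Fl w) = complex_of_real (Re (integral\<^sup>L V (Fl w)))"
    by (metis Reals_cnj_iff complex_is_Real_iff of_real_Re)
  also have "Re (integral\<^sup>L V (Fl w)) = integral\<^sup>L V (\<lambda>a. Re (Fl w a))" using i by simp
  also have "\<dots> = integral\<^sup>L V (\<lambda>a. cos (w*a) - 1)" by (simp only: Re_Fl)
  also have "complex_of_real \<dots> = integral\<^sup>L V (\<lambda>a. complex_of_real (cos (w*a) - 1))"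
    by (rule integral_complex_of_real[symmetric])
  finally have e: "integral\<^sup>L V (Fl w) = integral\<^sup>L V (\<lambda>a. complex_of_real (cos (w*a) - 1))" .
  have "levy_exponent V w = integral\<^sup>L V (Fl w)" unfolding levy_exponent_def Fl_def ..
  with e show "levy_exponent V w = integral\<^sup>L V (\<lambda>a. complex_of_real (cos (w*a) - 1))" by simp
  have "integrable V (\<lambda>a. complex_of_real (Re (Fl w a)))"
    using i by (intro integrable_bounded_linear[OF bounded_linear_of_real]) auto
  then show "integrable V (\<lambda>a. complex_of_real (cos (w*a) - 1))" by (simp add: Re_Fl)
qed



theorem lemma3p12:
  fixes V :: "real measure" and p q :: real
  assumes "levy_measure V"
    and "0 < p" and "p \<le> q" and "q \<le> 2"
    and "V \<in> script_M (Min ({p, q} \<union> A_sym V)) (Max ({p, q} \<union> A_sym V))"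
  shows "\<exists>\<kappa>1 \<kappa>2. \<kappa>1 \<ge> 0 \<and> \<kappa>2 \<ge> 0 \<and> (\<forall>\<omega>1 \<omega>2.
     cmod (levy_exponent V \<omega>2 - levy_exponent V \<omega>1)
       \<le> \<kappa>1 * h_fun (Min ({p, q} \<union> A_sym V)) \<omega>1 \<omega>2
        + \<kappa>2 * h_fun (Max ({p, q} \<union> A_sym V)) \<omega>1 \<omega>2)"
proof -
  define t where "t = Min ({p, q} \<union> A_sym V)"
  define s where "s = Max ({p, q} \<union> A_sym V)"
  have sV: "sets V = sets borel" using assms(1) by (simp add: levy_measure_def radon_on_punctured_def)
  have SM: "(\<integral>\<^sup>+ a. ennreal (indicator {a. 0 < \<bar>a\<bar> \<and> \<bar>a\<bar> < 1} a * \<bar>a\<bar> powr s) \<partial>V) < \<infinity>"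
     "(\<integral>\<^sup>+ a. ennreal (indicator {a. 1 \<le> \<bar>a\<bar>} a * \<bar>a\<bar> powr t) \<partial>V) < \<infinity>"
    using assms(5) by (simp_all add: script_M_def s_def t_def)
  show ?thesis
  proof (cases "symmetric_measure V")
    case True
    then have st: "t = p" "s = q" using assms by (simp_all add: t_def s_def A_sym_def)
    have g1: "\<And>w. integrable V (\<lambda>a. complex_of_real (cos (w*a) - 1))" using sym_eq[OF assms(1) True] by blast
    have g2: "\<And>w. levy_exponent V w = integral\<^sup>L V (\<lambda>a. complex_of_real (cos (w*a) - 1))"
      using sym_eq[OF assms(1) True] by blast
    have g3: "\<And>w1 w2 a. cmod (complex_of_real (cos (w2*a) - 1) - complex_of_real (cos (w1*a) - 1)) \<le> 8 * Bnd s t w1 w2 a"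
      using assms st by (intro sym_pointwise) auto
    have g4: "integrable V (\<lambda>a. indicator {a. \<bar>a\<bar> < 1} a * \<bar>a\<bar> powr s)"
      using SM(1) assms st by (intro integrable_f1[OF sV]) auto
    have g5: "integrable V (\<lambda>a. indicator {a. 1 \<le> \<bar>a\<bar>} a * \<bar>a\<bar> powr t)"
      using SM(2) by (intro integrable_f2[OF sV])
    show ?thesis unfolding t_def[symmetric] s_def[symmetric] by (rule final[OF g1 g2 g3 _ g4 g5]) simp
  next
    case False
    then have st: "t = min p 1" "s = max q 1" using assms by (simp_all add: t_def s_def A_sym_def)
    have g1: "\<And>w. integrable V (Fl w)" by (rule integrable_Fl[OF assms(1)])
    have g2: "\<And>w. levy_exponent V w = integral\<^sup>L V (Fl w)" unfolding levy_exponent_def Fl_def ..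
    have g3: "\<And>w1 w2 a. cmod (Fl w2 a - Fl w1 a) \<le> 8 * Bnd s t w1 w2 a"
      using assms st by (intro nonsym_pointwise) auto
    have g4: "integrable V (\<lambda>a. indicator {a. \<bar>a\<bar> < 1} a * \<bar>a\<bar> powr s)"
      using SM(1) assms st by (intro integrable_f1[OF sV]) auto
    have g5: "integrable V (\<lambda>a. indicator {a. 1 \<le> \<bar>a\<bar>} a * \<bar>a\<bar> powr t)"
      using SM(2) by (intro integrable_f2[OF sV])
    show ?thesis unfolding t_def[symmetric] s_def[symmetric] by (rule final[OF g1 g2 g3 _ g4 g5]) simp
  qed
qed

end
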